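(* For a supersimple $2$-$(n,4,\lambda)$ design $\mathcal{D}=(\Omega,\mathcal{B})$, the following are equivalent: (i) for all $a,b,c,d\in\Omega$, $[a,b]^{[c,d]}=[a^{[c,d]},b^{[c,d]}]$; (ii) for all $a,b,c\in\Omega$, $[a,b]^{[b,c]}=[a^{[b,c]},c]$; (iii) for all $a,b,c\in\Omega$, $[b,c]=[a,b,c,a^{[b,c]}]$. In addition, if these conditions hold, then $\mathcal{L}_\infty(\mathcal{D})$ (for $\infty\in\Omega$) is a group of automorphisms of $\mathcal{D}$.
   Context: A $2$-$(n,4,\lambda)$ design $(\Omega,\mathcal{B})$: $n$ points, a multiset of $4$-subsets (lines), every $2$-subset in exactly $\lambda$ lines; supersimple: distinct lines meet in at most two points. For distinct $a,b$ with lines $\{a,b,a_i,b_i\}$ through them, $[a,b]:=(a,b)\prod_i(a_i,b_i)\in\operatorname{Sym}(\Omega)$; $[a,a]:=1$. Permutations act on the right ($x^g$), products composed left to right, and $g^h=h^{-1}gh$. Move sequence $[a_0,\dots,a_k]:=[a_0,a_1][a_1,a_2]\cdots[a_{k-1},a_k]$; $\mathcal{L}_\infty(\mathcal{D})$ is the set of all move sequences starting at $\infty$. *)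

theory Defs
  imports Main "HOL-Library.Multiset" "HOL-Combinatorics.Permutations"
begin

definition design :: "'a set \<Rightarrow> 'a set multiset \<Rightarrow> nat \<Rightarrow> nat \<Rightarrow> bool" where
  "design \<Omega> B n lam \<longleftrightarrow> finite \<Omega> \<and> card \<Omega> = n \<and>
     (\<forall>L. L \<in># B \<longrightarrow> L \<subseteq> \<Omega> \<and> card L = 4) \<and>
     (\<forall>x\<in>\<Omega>. \<forall>y\<in>\<Omega>. x \<noteq> y \<longrightarrow> size (filter_mset (\<lambda>L. {x, y} \<subseteq> L) B) = lam)"

definition supersimple :: "'a set multiset \<Rightarrow> bool" where
  "supersimple B \<longleftrightarrow> (\<forall>X Y. X \<in># B \<longrightarrow> Y \<in># B - {#X#} \<longrightarrow> card (X \<inter> Y) \<le> 2)"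

text \<open>The move [a,b] = (a,b) prod_i (a_i,b_i), written out pointwise (the transpositions
  are disjoint by supersimplicity). [a,a] = 1.\<close>
definition move :: "'a set multiset \<Rightarrow> 'a \<Rightarrow> 'a \<Rightarrow> 'a \<Rightarrow> 'a" where
  "move B a b x =
     (if a = b then x
      else if x = a then b
      else if x = b then a
      else if (\<exists>L. L \<in># B \<and> {a, b, x} \<subseteq> L)
        then (let L = (SOME L. L \<in># B \<and> {a, b, x} \<subseteq> L) in THE y. L - {a, b, x} = {y})
      else x)"

text \<open>Permutations act on the right, products composed left to right:
  x^(gh) = (x^g)^h, i.e. gh is the function h o g. Conjugation g^h = h^-1 g h.\<close>
definition conjp :: "('a \<Rightarrow> 'a) \<Rightarrow> ('a \<Rightarrow> 'a) \<Rightarrow> ('a \<Rightarrow> 'a)" where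
  "conjp g h = h \<circ> g \<circ> inv h"

fun moveseq :: "'a set multiset \<Rightarrow> 'a list \<Rightarrow> 'a \<Rightarrow> 'a" where
  "moveseq B [] = id"
| "moveseq B [x] = id"
| "moveseq B (x # y # r) = moveseq B (y # r) \<circ> move B x y"

definition Linf :: "'a set \<Rightarrow> 'a set multiset \<Rightarrow> 'a \<Rightarrow> ('a \<Rightarrow> 'a) set" where
  "Linf \<Omega> B pinf = {moveseq B (pinf # as) | as. set as \<subseteq> \<Omega>}"

definition automorphism :: "'a set \<Rightarrow> 'a set multiset \<Rightarrow> ('a \<Rightarrow> 'a) \<Rightarrow> bool" where
  "automorphism \<Omega> B g \<longleftrightarrow> g permutes \<Omega> \<and> image_mset (\<lambda>L. g ` L) B = B"

definition aut_group :: "'a set \<Rightarrow> 'a set multiset \<Rightarrow> ('a \<Rightarrow> 'a) set \<Rightarrow> bool" where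
  "aut_group \<Omega> B G \<longleftrightarrow> (\<forall>g\<in>G. automorphism \<Omega> B g) \<and> id \<in> G \<and>
     (\<forall>g\<in>G. \<forall>h\<in>G. h \<circ> g \<in> G) \<and> (\<forall>g\<in>G. inv g \<in> G)"

end

theory Submission
  imports Defs
begin


lemma move_sym: "move B a b = move B b a"
  by (rule ext) (auto simp: move_def insert_commute)

lemma move_same[simp]: "move B a a = id"
  by (rule ext) (simp add: move_def)

lemma move_a[simp]: "move B a b a = b" and move_b[simp]: "move B a b b = a"
  by (auto simp: move_def)

locale ss =
  fixes \<Omega> :: "'a set" and B :: "'a set multiset" and n lam :: nat
  assumes D: "design \<Omega> B n lam" and S: "supersimple B"
begin

lemma lines: "L \<in># B \<Longrightarrow> L \<subseteq> \<Omega> \<and> card L = 4"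
  using D unfolding design_def by blast

lemma finL: "L \<in># B \<Longrightarrow> finite L"
  using lines by (metis card.infinite zero_neq_numeral)

lemma uniq: assumes "L \<in># B" "M \<in># B" "3 \<le> card (L \<inter> M)" shows "L = M"
proof (rule ccontr)
  assume "L \<noteq> M"
  then have "M \<in># B - {#L#}" using assms(2) by (simp add: in_diff_count)
  then show False using S assms(1,3) unfolding supersimple_def by fastforce
qed

lemma uniq3: assumes "L \<in># B" "M \<in># B" "a \<noteq> b" "a \<noteq> x" "b \<noteq> x"
  "{a,b,x} \<subseteq> L" "{a,b,x} \<subseteq> M" shows "L = M"
proof -
  have "card {a,b,x} \<le> card (L \<inter> M)"
    by (rule card_mono) (use assms finL in auto)
  then show ?thesis using assms uniq by auto
qed

lemma count1: "count B L \<le> 1"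
proof (rule ccontr)
  assume "\<not> count B L \<le> 1"
  then have c2: "2 \<le> count B L" by simp
  have "L \<in># B" using c2 count_greater_zero_iff[of B L] by linarith
  moreover have "L \<in># B - {#L#}" using c2 in_diff_count[of L B "{#L#}"] by simp
  ultimately show False using S lines[of L] unfolding supersimple_def by fastforce
qed

lemma four: assumes "card L = 4" "a \<in> L" "b \<in> L" "x \<in> L" "a \<noteq> b" "a \<noteq> x" "b \<noteq> x"
  shows "\<exists>y. L - {a,b,x} = {y} \<and> y \<notin> {a,b,x} \<and> y \<in> L"
proof -
  have f: "finite L" using assms(1) by (metis card.infinite zero_neq_numeral)
  have "card (L - {a,b,x}) = Suc 0" using assms f by (subst card_Diff_subset) auto
  then have "\<exists>y. L - {a,b,x} = {y}" by (rule card_1_singleton_iff[THEN iffD1])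
  then obtain y where "L - {a,b,x} = {y}" by blast
  then show ?thesis by blast
qed

lemma move_line: assumes "L \<in># B" "{a,b,x} \<subseteq> L" "a \<noteq> b" "a \<noteq> x" "b \<noteq> x" "y \<in> L" "y \<notin> {a,b,x}"
  shows "move B a b x = y"
proof -
  have ex: "\<exists>L. L \<in># B \<and> {a, b, x} \<subseteq> L" using assms by blast
  define L' where "L' = (SOME L. L \<in># B \<and> {a, b, x} \<subseteq> L)"
  have L': "L' \<in># B \<and> {a,b,x} \<subseteq> L'" unfolding L'_def using someI_ex[OF ex] .
  have "L' = L" by (rule uniq3[of L' L a b x]) (use L' assms in auto)
  have "\<exists>y. L - {a,b,x} = {y} \<and> y \<notin> {a,b,x} \<and> y \<in> L"
    by (rule four) (use lines[OF assms(1)] assms(2-5) in auto)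
  then obtain z where z: "L - {a,b,x} = {z}" by blast
  have "y \<in> L - {a,b,x}" using assms(6,7) by simp
  then have zy: "z = y" using z by simp
  have "move B a b x = (THE y. L' - {a, b, x} = {y})"
    unfolding move_def L'_def Let_def
    by (simp only: if_not_P[OF assms(3)] if_not_P[OF not_sym[OF assms(4)]] if_not_P[OF not_sym[OF assms(5)]] if_P[OF ex])
  also have "\<dots> = y" using \<open>L' = L\<close> z zy by simp
  finally show ?thesis .
qed

lemma move_cases: assumes "a \<noteq> b" "x \<noteq> a" "x \<noteq> b"
  shows "(\<exists>L. L \<in># B \<and> {a,b,x} \<subseteq> L \<and> move B a b x \<in> L \<and> move B a b x \<notin> {a,b,x})
    \<or> ((\<not>(\<exists>L. L \<in># B \<and> {a,b,x} \<subseteq> L)) \<and> move B a b x = x)"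
proof (cases "\<exists>L. L \<in># B \<and> {a,b,x} \<subseteq> L")
  case True
  then obtain L where L: "L \<in># B" "{a,b,x} \<subseteq> L" by blast
  have "\<exists>y. L - {a,b,x} = {y} \<and> y \<notin> {a,b,x} \<and> y \<in> L"
    by (rule four) (use lines[OF L(1)] L(2) assms in auto)
  then obtain y where "L - {a,b,x} = {y}" "y \<notin> {a,b,x}" "y \<in> L" by blast
  then have "move B a b x = y" using move_line[OF L(1,2)] assms by auto
  then show ?thesis using L \<open>y \<in> L\<close> \<open>y \<notin> {a,b,x}\<close> by blast
next
  case False
  then show ?thesis using assms unfolding move_def by auto
qed

lemma move_inv[simp]: "move B a b (move B a b x) = x"
proof (cases "a = b \<or> x = a \<or> x = b")
  case True then show ?thesis by auto
next
  case False
  then have ne: "a \<noteq> b" "x \<noteq> a" "x \<noteq> b" by auto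
  from move_cases[OF ne] show ?thesis
  proof
    assume "\<exists>L. L \<in># B \<and> {a,b,x} \<subseteq> L \<and> move B a b x \<in> L \<and> move B a b x \<notin> {a,b,x}"
    then obtain L where L: "L \<in># B" "{a,b,x} \<subseteq> L" "move B a b x \<in> L" "move B a b x \<notin> {a,b,x}" by blast
    show ?thesis by (rule move_line[OF L(1)]) (use L ne in auto)
  qed auto
qed

lemma move_comp: "move B a b \<circ> move B a b = id"
  by (rule ext) simp

lemma inv_move: "inv (move B a b) = move B a b"
  by (rule inv_unique_comp; rule move_comp)

lemma move_inj: "move B a b x = move B a b y \<longleftrightarrow> x = y"
  by (metis move_inv)

lemma move_out: assumes "a \<in> \<Omega>" "b \<in> \<Omega>" "x \<notin> \<Omega>" shows "move B a b x = x"
proof -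
  have "\<not>(\<exists>L. L \<in># B \<and> {a,b,x} \<subseteq> L)" using lines assms by blast
  then show ?thesis using assms unfolding move_def by auto
qed

lemma move_in: assumes "a \<in> \<Omega>" "b \<in> \<Omega>" "x \<in> \<Omega>" shows "move B a b x \<in> \<Omega>"
proof (cases "a = b \<or> x = a \<or> x = b")
  case True then show ?thesis using assms by auto
next
  case False
  then have ne: "a \<noteq> b" "x \<noteq> a" "x \<noteq> b" by auto
  from move_cases[OF ne] show ?thesis
  proof
    assume "\<exists>L. L \<in># B \<and> {a,b,x} \<subseteq> L \<and> move B a b x \<in> L \<and> move B a b x \<notin> {a,b,x}"
    then obtain L where "L \<in># B" "move B a b x \<in> L" by blast
    then show ?thesis using lines by blast
  qed (use assms in simp)
qed

lemma move_permutes: assumes "a \<in> \<Omega>" "b \<in> \<Omega>" shows "move B a b permutes \<Omega>"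
  unfolding permutes_def using move_out[OF assms] by (metis move_inv)

end


context ss begin

lemma card4_pick: assumes "card L = 4" "b \<in> L"
  shows "\<exists>a x y. L = {b,a,x,y} \<and> b \<noteq> a \<and> b \<noteq> x \<and> b \<noteq> y \<and> a \<noteq> x \<and> a \<noteq> y \<and> x \<noteq> y"
proof -
  have f: "finite L" using assms(1) by (metis card.infinite zero_neq_numeral)
  have "card (L - {b}) = 3" using assms f by simp
  then have "\<exists>a x y. L - {b} = {a,x,y} \<and> a \<noteq> x \<and> x \<noteq> y \<and> a \<noteq> y" by (rule card_3_iff[THEN iffD1])
  then obtain a x y where "L - {b} = {a,x,y}" "a \<noteq> x" "x \<noteq> y" "a \<noteq> y" by blast
  then show ?thesis using assms(2) by blast
qed

lemma auto_move:
  assumes inv: "\<And>x. g (g x) = x" and lp: "\<And>L. L \<in># B \<Longrightarrow> g ` L \<in># B"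
  shows "move B (g a) (g b) (g x) = g (move B a b x)"
proof -
  have inj: "g u = g v \<longleftrightarrow> u = v" for u v by (metis inv)
  show ?thesis
  proof (cases "a = b \<or> x = a \<or> x = b")
    case True then show ?thesis by auto
  next
    case False
    then have ne: "a \<noteq> b" "x \<noteq> a" "x \<noteq> b" by auto
    then have ne': "g a \<noteq> g b" "g x \<noteq> g a" "g x \<noteq> g b" using inj by auto
    from move_cases[OF ne] show ?thesis
    proof
      assume "\<exists>L. L \<in># B \<and> {a,b,x} \<subseteq> L \<and> move B a b x \<in> L \<and> move B a b x \<notin> {a,b,x}"
      then obtain L where L: "L \<in># B" "{a,b,x} \<subseteq> L" "move B a b x \<in> L" "move B a b x \<notin> {a,b,x}" by blast
      show ?thesis
        by (rule move_line[OF lp[OF L(1)]]) (use L ne' inj in auto)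
    next
      assume A: "(\<not>(\<exists>L. L \<in># B \<and> {a,b,x} \<subseteq> L)) \<and> move B a b x = x"
      from move_cases[OF ne'] show ?thesis
      proof
        assume "\<exists>L. L \<in># B \<and> {g a,g b,g x} \<subseteq> L \<and> move B (g a) (g b) (g x) \<in> L \<and> move B (g a) (g b) (g x) \<notin> {g a,g b,g x}"
        then obtain M where M: "M \<in># B" "{g a,g b,g x} \<subseteq> M" by blast
        have "g ` M \<in># B" using lp[OF M(1)] .
        have "a \<in> g ` M" using M(2) by (intro image_eqI[of a g "g a"]) (auto simp: inv)
        moreover have "b \<in> g ` M" using M(2) by (intro image_eqI[of b g "g b"]) (auto simp: inv)
        moreover have "x \<in> g ` M" using M(2) by (intro image_eqI[of x g "g x"]) (auto simp: inv)
        ultimately have "{a,b,x} \<subseteq> g ` M" by simp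
        moreover note \<open>g ` M \<in># B\<close>
        ultimately show ?thesis using A by blast
      next
        assume "(\<not>(\<exists>L. L \<in># B \<and> {g a,g b,g x} \<subseteq> L)) \<and> move B (g a) (g b) (g x) = g x"
        then show ?thesis using A by simp
      qed
    qed
  qed
qed

lemma auto_conj:
  assumes inv: "\<And>x. g (g x) = x" and lp: "\<And>L. L \<in># B \<Longrightarrow> g ` L \<in># B"
  shows "conjp (move B a b) g = move B (g a) (g b)"
proof -
  have "inv g = g" by (rule inv_unique_comp) (auto simp: inv)
  then show ?thesis unfolding conjp_def
    by (intro ext) (simp add: auto_move[OF inv lp, symmetric] inv)
qed

definition P2 where "P2 \<longleftrightarrow> (\<forall>a\<in>\<Omega>. \<forall>b\<in>\<Omega>. \<forall>c\<in>\<Omega>.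
             conjp (move B a b) (move B b c) = move B (move B b c a) c)"

lemma P2_pt: assumes "P2" "a \<in> \<Omega>" "b \<in> \<Omega>" "c \<in> \<Omega>"
  shows "move B b c (move B a b (move B b c z)) = move B (move B b c a) c z"
proof -
  have "conjp (move B a b) (move B b c) = move B (move B b c a) c" using assms unfolding P2_def by blast
  then show ?thesis unfolding conjp_def inv_move by (metis comp_apply)
qed

lemma lineB: assumes "P2" "b \<in> \<Omega>" "c \<in> \<Omega>" "L \<in># B" "b \<in> L"
  shows "move B b c ` L \<in># B"
proof (cases "b = c")
  case True then show ?thesis using assms by simp
next
  case False
  define g where "g = move B b c"
  have inj: "g u = g v \<longleftrightarrow> u = v" for u v unfolding g_def by (rule move_inj)
  obtain a x y where L: "L = {b,a,x,y}" "b \<noteq> a" "b \<noteq> x" "b \<noteq> y" "a \<noteq> x" "a \<noteq> y" "x \<noteq> y"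
    using card4_pick[OF conjunct2[OF lines[OF assms(4)]] assms(5)] by blast
  have a\<Omega>: "a \<in> \<Omega>" using L lines[OF assms(4)] by auto
  have mxy: "move B a b x = y"
    by (rule move_line[OF assms(4)]) (use L in auto)
  have "g (move B a b (g (g x))) = move B (g a) c (g x)"
    unfolding g_def by (rule P2_pt[OF assms(1) a\<Omega> assms(2,3)])
  then have e: "move B (g a) c (g x) = g y" using mxy unfolding g_def by simp
  have gb: "g b = c" unfolding g_def by simp
  have ne: "g a \<noteq> c" "g x \<noteq> g a" "g x \<noteq> c" using inj L gb by metis+
  from move_cases[OF ne] show ?thesis
  proof
    assume "\<exists>M. M \<in># B \<and> {g a,c,g x} \<subseteq> M \<and> move B (g a) c (g x) \<in> M \<and> move B (g a) c (g x) \<notin> {g a,c,g x}"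
    then obtain M where M: "M \<in># B" "{g a,c,g x, g y} \<subseteq> M" using e by auto
    have "g ` L = {c, g a, g x, g y}" using L gb by auto
    moreover have "card {c, g a, g x, g y} = 4" using inj L gb by auto
    ultimately have "g ` L = M" using M lines[OF M(1)] finL[OF M(1)]
      by (metis card_subset_eq insert_commute)
    then show ?thesis using M g_def by simp
  next
    assume "(\<not>(\<exists>M. M \<in># B \<and> {g a,c,g x} \<subseteq> M)) \<and> move B (g a) c (g x) = g x"
    then have "g y = g x" using e by simp
    then show ?thesis using inj L by simp
  qed
qed

lemma P2_P3: assumes "P2" "a \<in> \<Omega>" "b \<in> \<Omega>" "c \<in> \<Omega>"
  shows "move B b c = moveseq B [a, b, c, move B b c a]"
proof (rule ext)
  fix z
  have e1: "move B c (move B b c a) = move B (move B b c a) c" by (rule move_sym)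
  have "move B (move B b c a) c (move B b c (move B a b z)) = move B b c z"
    using P2_pt[OF assms, of "move B b c (move B a b z)"] by simp
  then have "move B c (move B b c a) (move B b c (move B a b z)) = move B b c z"
    by (simp only: e1)
  then show "move B b c z = moveseq B [a, b, c, move B b c a] z" by simp
qed

lemma P3_P2: assumes "\<forall>a\<in>\<Omega>. \<forall>b\<in>\<Omega>. \<forall>c\<in>\<Omega>. move B b c = moveseq B [a, b, c, move B b c a]"
  shows P2
  unfolding P2_def
proof (intro ballI ext)
  fix a b c z assume h: "a \<in> \<Omega>" "b \<in> \<Omega>" "c \<in> \<Omega>"
  let ?a = "move B b c a"
  have e: "move B b c w = move B c ?a (move B b c (move B a b w))" for w
    using assms h by (metis comp_apply moveseq.simps id_comp)
  have "conjp (move B a b) (move B b c) z = move B b c (move B a b (move B b c z))"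
    unfolding conjp_def inv_move by simp
  also have "\<dots> = move B c ?a (move B b c (move B a b (move B a b (move B b c z))))"
    by (rule e)
  also have "\<dots> = move B ?a c z" by (simp add: move_sym)
  finally show "conjp (move B a b) (move B b c) z = move B ?a c z" .
qed

lemma lineC: assumes "P2" "b \<in> \<Omega>" "c \<in> \<Omega>" "L \<in># B"
  shows "move B b c ` L \<in># B"
proof -
  consider "b \<in> L" | "c \<in> L" | "b \<notin> L" "c \<notin> L" by blast
  then show ?thesis
  proof cases
    case 1 then show ?thesis using lineB assms by blast
  next
    case 2 then show ?thesis using lineB[OF assms(1,3,2,4)] move_sym by metis
  next
    case 3
    have "L \<noteq> {}" using lines[OF assms(4)] by auto
    then obtain w where w: "w \<in> L" by blast
    have w\<Omega>: "w \<in> \<Omega>" using w lines[OF assms(4)] by auto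
    define w' where "w' = move B b c w"
    have w'\<Omega>: "w' \<in> \<Omega>" unfolding w'_def using move_in w\<Omega> assms by blast
    have eq: "move B b c = move B c w' \<circ> move B b c \<circ> move B w b"
      using P2_P3[OF assms(1) w\<Omega> assms(2,3)] unfolding w'_def by (simp add: comp_assoc)
    have L1: "move B w b ` L \<in># B" by (rule lineB[OF assms(1) w\<Omega> assms(2,4) w])
    have b1: "b \<in> move B w b ` L" using w by (metis image_eqI move_a)
    have L2: "move B b c ` (move B w b ` L) \<in># B" by (rule lineB[OF assms(1,2,3) L1 b1])
    have c2: "c \<in> move B b c ` (move B w b ` L)" using b1 by (metis image_eqI move_a)
    have L3: "move B c w' ` (move B b c ` (move B w b ` L)) \<in># B" by (rule lineB[OF assms(1,3) w'\<Omega> L2 c2])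
    have i: "move B c w' ` (move B b c ` (move B w b ` L)) = (move B c w' \<circ> move B b c \<circ> move B w b) ` L"
      by (simp only: image_comp comp_assoc)
    have ii: "move B b c ` L = (move B c w' \<circ> move B b c \<circ> move B w b) ` L"
      using eq by (rule arg_cong)
    show ?thesis unfolding ii i[symmetric] by (rule L3)
  qed
qed

end


lemma moveseq_snoc': "moveseq B (x # xs @ [v]) = move B (last (x#xs)) v \<circ> moveseq B (x#xs)"
proof (induction xs arbitrary: x)
  case Nil then show ?case by simp
next
  case (Cons y r)
  have "moveseq B (x # (y # r) @ [v]) = moveseq B (y # r @ [v]) \<circ> move B x y" by (simp only: append_Cons moveseq.simps)
  also have "\<dots> = (move B (last (y#r)) v \<circ> moveseq B (y#r)) \<circ> move B x y" by (simp only: Cons.IH)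
  also have "\<dots> = move B (last (x#y#r)) v \<circ> moveseq B (x#y#r)"
  proof -
    have "last (x#y#r) = last (y#r)" by simp
    then show ?thesis by (simp only: moveseq.simps comp_assoc)
  qed
  finally show ?case .
qed

lemma moveseq_snoc: "xs \<noteq> [] \<Longrightarrow> moveseq B (xs @ [v]) = move B (last xs) v \<circ> moveseq B xs"
  using moveseq_snoc' by (metis append_Cons list.exhaust)

context ss begin

lemma moveseq_rev': "moveseq B (rev (x#l)) \<circ> moveseq B (x#l) = id"
proof (induction l arbitrary: x)
  case Nil then show ?case by simp
next
  case (Cons y r)
  have "moveseq B (rev (x # y # r)) = move B y x \<circ> moveseq B (rev (y # r))"
    using moveseq_snoc[of "rev (y#r)" B x] by (simp add: last_rev)
  then have "moveseq B (rev (x # y # r)) \<circ> moveseq B (x # y # r)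
     = move B y x \<circ> (moveseq B (rev (y # r)) \<circ> moveseq B (y # r)) \<circ> move B x y"
    by (simp add: comp_assoc)
  also have "\<dots> = move B y x \<circ> id \<circ> move B x y" by (simp only: Cons.IH)
  also have "\<dots> = id" by (rule ext) (simp add: move_sym[of B y x])
  finally show ?case .
qed

lemma moveseq_rev: "moveseq B (rev l) \<circ> moveseq B l = id"
  by (cases l) (simp_all only: moveseq_rev', simp)


lemma move_aut: assumes "P2" "c \<in> \<Omega>" "d \<in> \<Omega>" shows "automorphism \<Omega> B (move B c d)"
  unfolding automorphism_def
proof
  show "move B c d permutes \<Omega>" using move_permutes assms by blast
  define f where "f = (\<lambda>L. move B c d ` L)"
  have ff: "f (f L) = L" for L unfolding f_def image_image by simp
  have lp: "L \<in># B \<Longrightarrow> f L \<in># B" for L using lineC assms unfolding f_def by blast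
  have "image_mset f B = B"
  proof (rule multiset_eqI)
    fix M
    have pre: "f -` {M} = {f M}"
    proof
      show "f -` {M} \<subseteq> {f M}"
      proof
        fix L assume "L \<in> f -` {M}"
        then have "f L = M" by simp
        then have "L = f M" using ff[of L] by simp
        then show "L \<in> {f M}" by simp
      qed
      show "{f M} \<subseteq> f -` {M}" using ff by simp
    qed
    have "count (image_mset f B) M = (\<Sum>y\<in>{f M} \<inter> set_mset B. count B y)"
      unfolding count_image_mset pre ..
    also have "\<dots> = count B M"
    proof (cases "M \<in># B")
      case True
      then have fM: "f M \<in># B" using lp by blast
      have "count B (f M) \<noteq> 0" using fM not_in_iff by metis
      then have "count B (f M) = 1" using count1[of "f M"] by linarith
      moreover have "count B M \<noteq> 0" using True not_in_iff by metis
      then have "count B M = 1" using count1[of M] by linarith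
      ultimately show ?thesis using fM by simp
    next
      case False
      then have "f M \<notin># B" using lp ff by metis
      then show ?thesis using False by (simp add: not_in_iff)
    qed
    finally show "count (image_mset f B) M = count B M" .
  qed
  then show "image_mset (\<lambda>L. move B c d ` L) B = B" unfolding f_def .
qed

lemma aut_comp: assumes "automorphism \<Omega> B g" "automorphism \<Omega> B h" shows "automorphism \<Omega> B (h \<circ> g)"
proof -
  have "image_mset (\<lambda>L. (h \<circ> g) ` L) B = image_mset (\<lambda>L. h ` L) (image_mset (\<lambda>L. g ` L) B)"
    by (simp add: multiset.map_comp comp_def image_comp)
  then show ?thesis using assms unfolding automorphism_def by (simp only: permutes_compose)
qed

lemma moveseq_aut: "P2 \<Longrightarrow> set (x # l) \<subseteq> \<Omega> \<Longrightarrow> automorphism \<Omega> B (moveseq B (x # l))"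
proof (induction l arbitrary: x)
  case Nil
  then show ?case unfolding automorphism_def by (simp add: permutes_id)
next
  case (Cons y r)
  have "automorphism \<Omega> B (moveseq B (y # r) \<circ> move B x y)"
    by (rule aut_comp) (use Cons move_aut in auto)
  then show ?case by (simp only: moveseq.simps)
qed


definition P3 where "P3 \<longleftrightarrow> (\<forall>a\<in>\<Omega>. \<forall>b\<in>\<Omega>. \<forall>c\<in>\<Omega>.
             move B b c = moveseq B [a, b, c, move B b c a])"

lemma app_move: assumes "P3" "set (p#as) \<subseteq> \<Omega>" "x \<in> \<Omega>" "y \<in> \<Omega>"
  shows "move B x y \<circ> moveseq B (p#as) = moveseq B (p # (as @ [x, y, move B x y (last (p#as))]))"
proof -
  define e where "e = last (p#as)"
  define e' where "e' = move B x y e"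
  have e\<Omega>: "e \<in> \<Omega>" unfolding e_def using assms(2) last_in_set[of "p#as"] by auto
  have l: "p # (as @ [x, y, e']) = (((p#as) @ [x]) @ [y]) @ [e']" by simp
  have s1: "moveseq B ((p#as) @ [x]) = move B e x \<circ> moveseq B (p#as)"
    using moveseq_snoc[of "p#as" B x] unfolding e_def by simp
  have s2: "moveseq B (((p#as) @ [x]) @ [y]) = move B x y \<circ> moveseq B ((p#as) @ [x])"
    using moveseq_snoc[of "(p#as) @ [x]" B y] by simp
  have s3: "moveseq B ((((p#as) @ [x]) @ [y]) @ [e']) = move B y e' \<circ> moveseq B (((p#as) @ [x]) @ [y])"
    using moveseq_snoc[of "((p#as) @ [x]) @ [y]" B e'] by simp
  have "moveseq B (p # (as @ [x, y, e'])) = move B y e' \<circ> (move B x y \<circ> (move B e x \<circ> moveseq B (p#as)))"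
    unfolding l s3 s2 s1 ..
  moreover have "move B x y = moveseq B [e, x, y, e']"
    using assms(1) e\<Omega> assms(3,4) unfolding P3_def e'_def by blast
  then have "move B x y = move B y e' \<circ> move B x y \<circ> move B e x" by (simp only: moveseq.simps id_comp)
  then have "move B x y \<circ> moveseq B (p#as) = (move B y e' \<circ> move B x y \<circ> move B e x) \<circ> moveseq B (p#as)"
    by (rule arg_cong)
  ultimately show ?thesis unfolding e'_def[symmetric] e_def[symmetric] by (simp only: comp_assoc)
qed

lemma Linf_iff: "g \<in> Linf \<Omega> B pinf \<longleftrightarrow> (\<exists>as. g = moveseq B (pinf # as) \<and> set as \<subseteq> \<Omega>)"
  unfolding Linf_def by blast

lemma closure_step: assumes "P3" "pinf \<in> \<Omega>" "x \<in> \<Omega>" "y \<in> \<Omega>" "g \<in> Linf \<Omega> B pinf"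
  shows "move B x y \<circ> g \<in> Linf \<Omega> B pinf"
proof -
  obtain as where g: "g = moveseq B (pinf # as)" "set as \<subseteq> \<Omega>" using assms(5) Linf_iff by blast
  have "move B x y \<circ> g = moveseq B (pinf # (as @ [x, y, move B x y (last (pinf#as))]))"
    unfolding g(1) by (rule app_move) (use assms g in auto)
  moreover have "set (as @ [x, y, move B x y (last (pinf#as))]) \<subseteq> \<Omega>"
    using g(2) assms(2-4) move_in last_in_set[of "pinf#as"] by auto
  ultimately show ?thesis unfolding Linf_iff by blast
qed

lemma closure: assumes "P3" "pinf \<in> \<Omega>"
  shows "set (x # l) \<subseteq> \<Omega> \<Longrightarrow> g \<in> Linf \<Omega> B pinf \<Longrightarrow> moveseq B (x # l) \<circ> g \<in> Linf \<Omega> B pinf"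
proof (induction l arbitrary: x g)
  case Nil then show ?case by simp
next
  case (Cons y r)
  have "move B x y \<circ> g \<in> Linf \<Omega> B pinf" using closure_step[OF assms] Cons.prems by auto
  then have "moveseq B (y # r) \<circ> (move B x y \<circ> g) \<in> Linf \<Omega> B pinf"
    by (rule Cons.IH[rotated]) (use Cons.prems in auto)
  then show ?case by (simp only: moveseq.simps comp_assoc)
qed

lemma aut_group_Linf: assumes "P2" "P3" "pinf \<in> \<Omega>" shows "aut_group \<Omega> B (Linf \<Omega> B pinf)"
  unfolding aut_group_def
proof (intro conjI ballI)
  fix g assume "g \<in> Linf \<Omega> B pinf"
  then obtain as where g: "g = moveseq B (pinf # as)" "set as \<subseteq> \<Omega>" using Linf_iff by blast
  show "automorphism \<Omega> B g" unfolding g(1) by (rule moveseq_aut) (use assms g in auto)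
next
  have "id = moveseq B [pinf]" by simp
  then show "id \<in> Linf \<Omega> B pinf" unfolding Linf_iff by fastforce
next
  fix g h assume g: "g \<in> Linf \<Omega> B pinf" and h: "h \<in> Linf \<Omega> B pinf"
  then obtain bs where h': "h = moveseq B (pinf # bs)" "set bs \<subseteq> \<Omega>" using Linf_iff by blast
  show "h \<circ> g \<in> Linf \<Omega> B pinf" unfolding h'(1) by (rule closure[OF assms(2,3)]) (use h' assms g in auto)
next
  fix g assume g: "g \<in> Linf \<Omega> B pinf"
  then obtain as where g': "g = moveseq B (pinf # as)" "set as \<subseteq> \<Omega>" using Linf_iff by blast
  have iv: "inv g = moveseq B (rev (pinf # as))"
    unfolding g'(1)
    by (rule inv_unique_comp) (metis moveseq_rev rev_rev_ident)+
  have idL: "id \<in> Linf \<Omega> B pinf" unfolding Linf_iff by (metis moveseq.simps(2) empty_subsetI list.set(1))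
  obtain q qs where q: "rev (pinf # as) = q # qs" by (metis list.exhaust rev_is_Nil_conv list.distinct(1))
  have "moveseq B (q # qs) \<circ> id \<in> Linf \<Omega> B pinf"
    by (rule closure[OF assms(2,3) _ idL]) (metis q g' assms(3) set_rev list.set(2) insert_subset)
  then show "inv g \<in> Linf \<Omega> B pinf" using iv q by simp
qed

end

theorem lemma2p7:
  fixes \<Omega> :: "'a set" and B :: "'a set multiset" and n lam :: nat
  assumes "design \<Omega> B n lam" and "supersimple B"
  shows "((\<forall>a\<in>\<Omega>. \<forall>b\<in>\<Omega>. \<forall>c\<in>\<Omega>. \<forall>d\<in>\<Omega>.
             conjp (move B a b) (move B c d) = move B (move B c d a) (move B c d b))
          \<longleftrightarrow> (\<forall>a\<in>\<Omega>. \<forall>b\<in>\<Omega>. \<forall>c\<in>\<Omega>.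
             conjp (move B a b) (move B b c) = move B (move B b c a) c))
       \<and> ((\<forall>a\<in>\<Omega>. \<forall>b\<in>\<Omega>. \<forall>c\<in>\<Omega>.
             conjp (move B a b) (move B b c) = move B (move B b c a) c)
          \<longleftrightarrow> (\<forall>a\<in>\<Omega>. \<forall>b\<in>\<Omega>. \<forall>c\<in>\<Omega>.
             move B b c = moveseq B [a, b, c, move B b c a]))
       \<and> ((\<forall>a\<in>\<Omega>. \<forall>b\<in>\<Omega>. \<forall>c\<in>\<Omega>. \<forall>d\<in>\<Omega>.
             conjp (move B a b) (move B c d) = move B (move B c d a) (move B c d b))
          \<longrightarrow> (\<forall>pinf\<in>\<Omega>. aut_group \<Omega> B (Linf \<Omega> B pinf)))"
proof -
  interpret ss \<Omega> B n lam by (rule ss.intro[OF assms])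
  define P1 where "P1 \<longleftrightarrow> (\<forall>a\<in>\<Omega>. \<forall>b\<in>\<Omega>. \<forall>c\<in>\<Omega>. \<forall>d\<in>\<Omega>.
             conjp (move B a b) (move B c d) = move B (move B c d a) (move B c d b))"
  have 12: "P1 \<Longrightarrow> P2" unfolding P1_def P2_def
  proof (intro ballI)
    fix a b c
    assume h: "\<forall>a\<in>\<Omega>. \<forall>b\<in>\<Omega>. \<forall>c\<in>\<Omega>. \<forall>d\<in>\<Omega>.
             conjp (move B a b) (move B c d) = move B (move B c d a) (move B c d b)"
      and abc: "a \<in> \<Omega>" "b \<in> \<Omega>" "c \<in> \<Omega>"
    have "conjp (move B a b) (move B b c) = move B (move B b c a) (move B b c b)" using h abc by blast
    then show "conjp (move B a b) (move B b c) = move B (move B b c a) c" by simp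
  qed
  have 21: "P2 \<Longrightarrow> P1" unfolding P1_def
  proof (intro ballI)
    fix a b c d assume "P2" "a \<in> \<Omega>" "b \<in> \<Omega>" "c \<in> \<Omega>" "d \<in> \<Omega>"
    show "conjp (move B a b) (move B c d) = move B (move B c d a) (move B c d b)"
      by (rule auto_conj) (use lineC \<open>P2\<close> \<open>c \<in> \<Omega>\<close> \<open>d \<in> \<Omega>\<close> in auto)
  qed
  have 23: "P2 \<Longrightarrow> P3" unfolding P3_def using P2_P3 by blast
  have 32: "P3 \<Longrightarrow> P2" unfolding P3_def by (rule P3_P2)
  have fin: "P1 \<Longrightarrow> \<forall>pinf\<in>\<Omega>. aut_group \<Omega> B (Linf \<Omega> B pinf)"
    using aut_group_Linf 12 23 by blast
  show ?thesis
    unfolding P1_def[symmetric] P2_def[symmetric] P3_def[symmetric]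
    using 12 21 23 32 fin by blast
qed

end
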